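(* With $G$ and $\widehat\Theta$ as in the context, the column number of $\widehat\Theta$ equals the order of $G$: $c(\widehat\Theta)=|G|$.
   Context: Column number of a substitution $\zeta$ over $\mathbb{B}$: $c(\zeta)=\min_{k\ge1,0\le j<\lambda^k}|\{\zeta^k(b)_j:b\in\mathbb{B}\}|$. Let $\theta:\mathbb{A}\to\mathbb{A}^\lambda$ ($\lambda\ge2$) be primitive (some $\theta^k(a)$ contains all letters for each $a$), injective on letters, with infinite subshift, $c=c(\theta)$. $\mathcal{X}$: sets $M\subset\mathbb{A}$ with $|M|=c$ and $M=\{\theta^k(a)_j:a\in\mathbb{A}\}$ for some $k\ge1$, $j<\lambda^k$; $\widetilde\theta(M)_j:=\{\theta(a)_j:a\in M\}\in\mathcal{X}$, with $a\mapsto\theta(a)_j$ a bijection $M\to\widetilde\theta(M)_j$. Assume (after passing to a power) $a_0\in M_0\in\mathcal{X}$, $\theta(a_0)_0=a_0$, $\widetilde\theta(M_0)_0=M_0$. Fix a total order on $M_0$ with minimum $a_0$ and $k_0\ge1$, $j_0<\lambda^{k_0}$ with $\theta^{k_0}(a)_{j_0}=a$ ($a\in M_0$), $\widetilde\theta^{k_0}(M)_{j_0}=M_0$ ($M\in\mathcal{X}$). Order each $M$ by $a<b$ iff $\theta^{k_0}(a)_{j_0}<\theta^{k_0}(b)_{j_0}$; $e_M(i)$ = $(i+1)$-th smallest element of $M$. $\widetilde\Theta(i,M)_j=(i',\widetilde\theta(M)_j)$ where $\theta(e_M(i))_j=e_{\widetilde\theta(M)_j}(i')$; $\sigma_{M,j}\in\mathcal{S}_c$: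 $\sigma_{M,j}(m)=n$ iff $\widetilde\Theta(n,M)_j=(m,\widetilde\theta(M)_j)$; $G=\langle\sigma_{M,j}:M\in\mathcal{X},j<\lambda\rangle\le\mathcal{S}_c$; $\widehat\Theta(\sigma,M)_j=(\sigma\circ\sigma_{M,j},\widetilde\theta(M)_j)$ on $G\times\mathcal{X}$. *)

theory Defs
  imports Main "HOL-Algebra.Bij" "HOL-Algebra.Generated_Groups"
begin

text \<open>A substitution of constant length lam over an alphabet is a map
  zeta :: 'b => nat => 'b, where zeta b j is the j-th letter (j < lam) of zeta(b).\<close>

text \<open>j-th letter of zeta^k(b), for j < lam^k.\<close>
fun subst_iter :: "('b \<Rightarrow> nat \<Rightarrow> 'b) \<Rightarrow> nat \<Rightarrow> nat \<Rightarrow> 'b \<Rightarrow> nat \<Rightarrow> 'b" where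
  "subst_iter \<zeta> lam 0 b j = b"
| "subst_iter \<zeta> lam (Suc k) b j = \<zeta> (subst_iter \<zeta> lam k b (j div lam)) (j mod lam)"

definition column_number :: "'b set \<Rightarrow> nat \<Rightarrow> ('b \<Rightarrow> nat \<Rightarrow> 'b) \<Rightarrow> nat" where
  "column_number B lam \<zeta> =
     Min {card ((\<lambda>b. subst_iter \<zeta> lam k b j) ` B) | k j. 1 \<le> k \<and> j < lam ^ k}"

definition primitive_subst :: "'a set \<Rightarrow> nat \<Rightarrow> ('a \<Rightarrow> nat \<Rightarrow> 'a) \<Rightarrow> bool" where
  "primitive_subst A lam \<theta> \<longleftrightarrow>
     (\<exists>k\<ge>1. \<forall>a\<in>A. \<forall>b\<in>A. \<exists>j<lam ^ k. subst_iter \<theta> lam k a j = b)"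

definition subst_language :: "'a set \<Rightarrow> nat \<Rightarrow> ('a \<Rightarrow> nat \<Rightarrow> 'a) \<Rightarrow> 'a list set" where
  "subst_language A lam \<theta> =
     {w. \<exists>a\<in>A. \<exists>k i. i + length w \<le> lam ^ k \<and>
           w = map (\<lambda>t. subst_iter \<theta> lam k a (i + t)) [0..<length w]}"

definition subshift :: "'a set \<Rightarrow> nat \<Rightarrow> ('a \<Rightarrow> nat \<Rightarrow> 'a) \<Rightarrow> (int \<Rightarrow> 'a) set" where
  "subshift A lam \<theta> =
     {x. range x \<subseteq> A \<and>
         (\<forall>i n. map (\<lambda>t. x (i + int t)) [0..<n] \<in> subst_language A lam \<theta>)}"

definition set_subst :: "('a \<Rightarrow> nat \<Rightarrow> 'a) \<Rightarrow> 'a set \<Rightarrow> nat \<Rightarrow> 'a set" where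
  "set_subst \<theta> M j = (\<lambda>a. \<theta> a j) ` M"

definition Xcal :: "'a set \<Rightarrow> nat \<Rightarrow> ('a \<Rightarrow> nat \<Rightarrow> 'a) \<Rightarrow> 'a set set" where
  "Xcal A lam \<theta> =
     {M. M \<subseteq> A \<and> card M = column_number A lam \<theta> \<and>
         (\<exists>k j. 1 \<le> k \<and> j < lam ^ k \<and> M = (\<lambda>a. subst_iter \<theta> lam k a j) ` A)}"

definition ordM :: "nat \<Rightarrow> ('a \<Rightarrow> nat \<Rightarrow> 'a) \<Rightarrow> ('a \<Rightarrow> 'a \<Rightarrow> bool) \<Rightarrow> nat \<Rightarrow> nat \<Rightarrow> 'a \<Rightarrow> 'a \<Rightarrow> bool" where
  "ordM lam \<theta> less0 k0 j0 a b \<longleftrightarrow>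
     less0 (subst_iter \<theta> lam k0 a j0) (subst_iter \<theta> lam k0 b j0)"

definition eM :: "nat \<Rightarrow> ('a \<Rightarrow> nat \<Rightarrow> 'a) \<Rightarrow> ('a \<Rightarrow> 'a \<Rightarrow> bool) \<Rightarrow> nat \<Rightarrow> nat \<Rightarrow> 'a set \<Rightarrow> nat \<Rightarrow> 'a" where
  "eM lam \<theta> less0 k0 j0 M i =
     (THE a. a \<in> M \<and> card {b \<in> M. ordM lam \<theta> less0 k0 j0 b a} = i)"

definition sigmaMj :: "'a set \<Rightarrow> nat \<Rightarrow> ('a \<Rightarrow> nat \<Rightarrow> 'a) \<Rightarrow> ('a \<Rightarrow> 'a \<Rightarrow> bool) \<Rightarrow> nat \<Rightarrow> nat
    \<Rightarrow> 'a set \<Rightarrow> nat \<Rightarrow> (nat \<Rightarrow> nat)" where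
  "sigmaMj A lam \<theta> less0 k0 j0 M j =
     restrict
       (\<lambda>m. THE n. n < column_number A lam \<theta> \<and>
              \<theta> (eM lam \<theta> less0 k0 j0 M n) j = eM lam \<theta> less0 k0 j0 (set_subst \<theta> M j) m)
       {..<column_number A lam \<theta>}"

definition Ggroup :: "'a set \<Rightarrow> nat \<Rightarrow> ('a \<Rightarrow> nat \<Rightarrow> 'a) \<Rightarrow> ('a \<Rightarrow> 'a \<Rightarrow> bool) \<Rightarrow> nat \<Rightarrow> nat
    \<Rightarrow> (nat \<Rightarrow> nat) set" where
  "Ggroup A lam \<theta> less0 k0 j0 =
     generate (BijGroup {..<column_number A lam \<theta>})
       {sigmaMj A lam \<theta> less0 k0 j0 M j | M j. M \<in> Xcal A lam \<theta> \<and> j < lam}"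

definition Theta_hat :: "'a set \<Rightarrow> nat \<Rightarrow> ('a \<Rightarrow> nat \<Rightarrow> 'a) \<Rightarrow> ('a \<Rightarrow> 'a \<Rightarrow> bool) \<Rightarrow> nat \<Rightarrow> nat
    \<Rightarrow> (nat \<Rightarrow> nat) \<times> 'a set \<Rightarrow> nat \<Rightarrow> (nat \<Rightarrow> nat) \<times> 'a set" where
  "Theta_hat A lam \<theta> less0 k0 j0 p j =
     (fst p \<otimes>\<^bsub>BijGroup {..<column_number A lam \<theta>}\<^esub> sigmaMj A lam \<theta> less0 k0 j0 (snd p) j,
      set_subst \<theta> (snd p) j)"

end

theory Submission
  imports Defs
begin

lemma rank_bij:
  assumes fin: "finite M" and irr: "\<forall>a\<in>M. \<not> r a a"
    and tr: "\<forall>a\<in>M. \<forall>b\<in>M. \<forall>d\<in>M. r a b \<longrightarrow> r b d \<longrightarrow> r a d"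
    and tot: "\<forall>a\<in>M. \<forall>b\<in>M. a \<noteq> b \<longrightarrow> r a b \<or> r b a"
  shows "bij_betw (\<lambda>a. card {b\<in>M. r b a}) M {..<card M}"
proof -
  let ?f = "\<lambda>a. card {b\<in>M. r b a}"
  have lt: "?f a < ?f b" if "a\<in>M" "b\<in>M" "r a b" for a b
  proof -
    have s1: "{x\<in>M. r x a} \<subseteq> {x\<in>M. r x b}" using that tr by blast
    have s2: "a \<in> {x\<in>M. r x b}" "a \<notin> {x\<in>M. r x a}" using that irr by auto
    have "{x\<in>M. r x a} \<subset> {x\<in>M. r x b}" using s1 s2 by blast
    thus ?thesis using fin by (intro psubset_card_mono) auto
  qed
  have inj: "inj_on ?f M"
  proof (rule inj_onI)
    fix a b assume "a\<in>M" "b\<in>M" "?f a = ?f b"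
    moreover have "a = b \<or> r a b \<or> r b a" using tot \<open>a\<in>M\<close> \<open>b\<in>M\<close> by blast
    ultimately show "a = b" using lt[of a b] lt[of b a] by auto
  qed
  have into: "?f ` M \<subseteq> {..<card M}"
  proof
    fix y assume "y \<in> ?f ` M" then obtain a where a: "a\<in>M" "y = ?f a" by auto
    have "{b\<in>M. r b a} \<subset> M" using a irr by auto
    hence "card {b\<in>M. r b a} < card M" using fin by (intro psubset_card_mono) auto
    thus "y \<in> {..<card M}" using a by simp
  qed
  have "card (?f ` M) = card M" using inj by (simp add: card_image)
  hence "?f ` M = {..<card M}" using into by (metis card_lessThan card_subset_eq finite_lessThan)
  thus ?thesis using inj by (simp add: bij_betw_def)
qed

locale TS =
  fixes A :: "'a set" and lam :: nat and \<theta> :: "'a \<Rightarrow> nat \<Rightarrow> 'a"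
    and less0 :: "'a \<Rightarrow> 'a \<Rightarrow> bool" and k0 j0 :: nat and M0 :: "'a set"
  assumes finA: "finite A" and lam: "lam \<ge> 2"
    and closed: "\<forall>a\<in>A. \<forall>j<lam. \<theta> a j \<in> A"
    and M0X: "M0 \<in> Xcal A lam \<theta>"
    and irrefl: "\<forall>a\<in>M0. \<not> less0 a a"
    and trans: "\<forall>a\<in>M0. \<forall>b\<in>M0. \<forall>d\<in>M0. less0 a b \<longrightarrow> less0 b d \<longrightarrow> less0 a d"
    and total: "\<forall>a\<in>M0. \<forall>b\<in>M0. a \<noteq> b \<longrightarrow> less0 a b \<or> less0 b a"
    and retk0: "\<forall>M\<in>Xcal A lam \<theta>. subst_iter (set_subst \<theta>) lam k0 M j0 = M0"
begin

abbreviation "c \<equiv> column_number A lam \<theta>"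
abbreviation "X \<equiv> Xcal A lam \<theta>"

lemma finS: "finite {card ((\<lambda>b. subst_iter \<theta> lam k b j) ` A) | k j. 1 \<le> k \<and> j < lam ^ k}"
  by (rule finite_subset[of _ "{..card A}"]) (auto intro: card_image_le[OF finA])

lemma col_le:
  assumes "1 \<le> k" "j < lam^k" shows "c \<le> card ((\<lambda>b. subst_iter \<theta> lam k b j) ` A)"
  unfolding column_number_def using finS assms by (auto intro!: Min_le)

lemma iter_set: "subst_iter (set_subst \<theta>) lam k M j = (\<lambda>a. subst_iter \<theta> lam k a j) ` M"
  by (induction k arbitrary: j) (auto simp: set_subst_def image_image)

lemma X_props: "M \<in> X \<Longrightarrow> M \<subseteq> A \<and> card M = c \<and> finite M"
  by (auto simp: Xcal_def intro: finite_subset[OF _ finA])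

lemma X_closed: assumes "M\<in>X" "j<lam" shows "set_subst \<theta> M j \<in> X"
proof -
  from assms obtain k j' where kj: "1 \<le> k" "j' < lam^k" "M = (\<lambda>a. subst_iter \<theta> lam k a j') ` A"
    and cM: "card M = c" and MA: "M\<subseteq>A" by (auto simp: Xcal_def)
  have lam0: "lam > 0" using lam by simp
  have dm: "(j'*lam + j) div lam = j'" "(j'*lam + j) mod lam = j" using assms(2) lam0 by auto
  have eq: "set_subst \<theta> M j = (\<lambda>a. subst_iter \<theta> lam (Suc k) a (j'*lam + j)) ` A"
    using kj(3) dm by (simp add: set_subst_def image_image)
  have lt: "j'*lam + j < lam^(Suc k)"
  proof -
    have "j'*lam + j < (j'+1)*lam" using assms(2) by simp
    also have "\<dots> \<le> lam^k * lam" using kj(2) by (intro mult_right_mono) auto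
    finally show ?thesis by (simp add: mult.commute)
  qed
  have "c \<le> card (set_subst \<theta> M j)" using col_le[of "Suc k" "j'*lam+j"] eq lt by simp
  moreover have "card (set_subst \<theta> M j) \<le> c" using cM card_image_le X_props[OF assms(1)]
    by (metis set_subst_def)
  moreover have "set_subst \<theta> M j \<subseteq> A" using MA closed assms(2) by (auto simp: set_subst_def)
  ultimately show ?thesis using eq lt unfolding Xcal_def
    by (intro CollectI conjI exI[of _ "Suc k"] exI[of _ "j'*lam+j"]) auto
qed

lemma inj_theta: assumes "M\<in>X" "j<lam" shows "inj_on (\<lambda>a. \<theta> a j) M"
proof (rule eq_card_imp_inj_on)
  show "finite M" using X_props[OF assms(1)] by simp
  show "card ((\<lambda>a. \<theta> a j) ` M) = card M"
    using X_props[OF assms(1)] X_props[OF X_closed[OF assms]] by (simp add: set_subst_def)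
qed

lemma phi_img: "M\<in>X \<Longrightarrow> (\<lambda>a. subst_iter \<theta> lam k0 a j0) ` M = M0"
  using retk0 iter_set by metis

lemma phi_inj: assumes "M\<in>X" shows "inj_on (\<lambda>a. subst_iter \<theta> lam k0 a j0) M"
proof (rule eq_card_imp_inj_on)
  show "finite M" using X_props[OF assms(1)] by simp
  show "card ((\<lambda>a. subst_iter \<theta> lam k0 a j0) ` M) = card M"
    using X_props[OF assms(1)] X_props[OF M0X] phi_img[OF assms] by simp
qed

lemma rk_bij: assumes "M\<in>X"
  shows "bij_betw (\<lambda>a. card {b\<in>M. ordM lam \<theta> less0 k0 j0 b a}) M {..<c}"
proof -
  have im: "\<And>a. a\<in>M \<Longrightarrow> subst_iter \<theta> lam k0 a j0 \<in> M0" using phi_img[OF assms] by blast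
  have ij: "\<And>a b. a\<in>M \<Longrightarrow> b\<in>M \<Longrightarrow> subst_iter \<theta> lam k0 a j0 = subst_iter \<theta> lam k0 b j0 \<Longrightarrow> a = b"
    using phi_inj[OF assms] by (auto dest: inj_onD)
  have "bij_betw (\<lambda>a. card {b\<in>M. ordM lam \<theta> less0 k0 j0 b a}) M {..<card M}"
  proof (rule rank_bij)
    show "finite M" using X_props[OF assms] by simp
    show "\<forall>a\<in>M. \<not> ordM lam \<theta> less0 k0 j0 a a" using im irrefl by (auto simp: ordM_def)
    show "\<forall>a\<in>M. \<forall>b\<in>M. \<forall>d\<in>M. ordM lam \<theta> less0 k0 j0 a b \<longrightarrow> ordM lam \<theta> less0 k0 j0 b d
       \<longrightarrow> ordM lam \<theta> less0 k0 j0 a d" using im trans unfolding ordM_def by blast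
    show "\<forall>a\<in>M. \<forall>b\<in>M. a \<noteq> b \<longrightarrow> ordM lam \<theta> less0 k0 j0 a b \<or> ordM lam \<theta> less0 k0 j0 b a"
      using im ij total unfolding ordM_def by metis
  qed
  thus ?thesis using X_props[OF assms] by simp
qed

lemma rk_inj: "M\<in>X \<Longrightarrow> inj_on (\<lambda>a. card {b\<in>M. ordM lam \<theta> less0 k0 j0 b a}) M"
  using rk_bij by (simp add: bij_betw_def)

lemma rk_img: "M\<in>X \<Longrightarrow> (\<lambda>a. card {b\<in>M. ordM lam \<theta> less0 k0 j0 b a}) ` M = {..<c}"
  using rk_bij by (simp add: bij_betw_def)

lemma eM_rk: assumes "M\<in>X" "a\<in>M"
  shows "eM lam \<theta> less0 k0 j0 M (card {b\<in>M. ordM lam \<theta> less0 k0 j0 b a}) = a"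
  unfolding eM_def
proof (rule the_equality)
  show "a \<in> M \<and> card {b \<in> M. ordM lam \<theta> less0 k0 j0 b a} = card {b \<in> M. ordM lam \<theta> less0 k0 j0 b a}"
    using assms by simp
  fix x assume x: "x \<in> M \<and> card {b \<in> M. ordM lam \<theta> less0 k0 j0 b x} = card {b \<in> M. ordM lam \<theta> less0 k0 j0 b a}"
  show "x = a" using inj_onD[OF rk_inj[OF assms(1)] _ _ assms(2)] x by simp
qed

lemma rk_ex: assumes "M\<in>X" "i<c" obtains a where "a\<in>M" "i = card {b\<in>M. ordM lam \<theta> less0 k0 j0 b a}"
proof -
  have "i \<in> (\<lambda>a. card {b\<in>M. ordM lam \<theta> less0 k0 j0 b a}) ` M" using rk_img[OF assms(1)] assms(2) by simp
  thus ?thesis using that by (rule imageE)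
qed

lemma eM_mem: assumes "M\<in>X" "i<c" shows "eM lam \<theta> less0 k0 j0 M i \<in> M"
proof -
  obtain a where "a\<in>M" "i = card {b\<in>M. ordM lam \<theta> less0 k0 j0 b a}"
    using rk_ex[OF assms] .
  thus ?thesis using eM_rk[OF assms(1)] by simp
qed

lemma eM_inj: assumes "M\<in>X" shows "inj_on (eM lam \<theta> less0 k0 j0 M) {..<c}"
proof (rule inj_onI)
  fix i1 i2 assume i: "i1 \<in> {..<c}" "i2 \<in> {..<c}" and e: "eM lam \<theta> less0 k0 j0 M i1 = eM lam \<theta> less0 k0 j0 M i2"
  obtain a1 where a1: "a1\<in>M" "i1 = card {b\<in>M. ordM lam \<theta> less0 k0 j0 b a1}"
    using rk_ex[OF assms] i(1) by blast
  obtain a2 where a2: "a2\<in>M" "i2 = card {b\<in>M. ordM lam \<theta> less0 k0 j0 b a2}"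
    using rk_ex[OF assms] i(2) by blast
  have "a1 = a2" using e a1 a2 eM_rk[OF assms(1) a1(1)] eM_rk[OF assms(1) a2(1)] by simp
  thus "i1 = i2" using a1 a2 by simp
qed

lemma eM_surj: assumes "M\<in>X" "a\<in>M" shows "\<exists>i<c. eM lam \<theta> less0 k0 j0 M i = a"
proof -
  have "card {b\<in>M. ordM lam \<theta> less0 k0 j0 b a} < c" using rk_img[OF assms(1)] assms(2) by blast
  thus ?thesis using eM_rk[OF assms] by blast
qed

lemma sigma_Bij: assumes "M\<in>X" "j<lam"
  shows "sigmaMj A lam \<theta> less0 k0 j0 M j \<in> Bij {..<c}"
proof -
  let ?e = "eM lam \<theta> less0 k0 j0"
  let ?N = "set_subst \<theta> M j"
  have NX: "?N \<in> X" using X_closed[OF assms] .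
  define f where "f m = (THE n. n < c \<and> \<theta> (?e M n) j = ?e ?N m)" for m
  have fp: "f m < c \<and> \<theta> (?e M (f m)) j = ?e ?N m" if m: "m < c" for m
    unfolding f_def
  proof (rule theI')
    have "?e ?N m \<in> ?N" using eM_mem[OF NX m] .
    then obtain a where a: "a\<in>M" "\<theta> a j = ?e ?N m" by (auto simp: set_subst_def)
    then obtain i where i: "i<c" "?e M i = a" using eM_surj[OF assms(1)] by blast
    show "\<exists>!n. n < c \<and> \<theta> (?e M n) j = ?e ?N m"
    proof (rule ex1I[of _ i])
      show "i < c \<and> \<theta> (?e M i) j = ?e ?N m" using i a by simp
      fix n assume n: "n < c \<and> \<theta> (?e M n) j = ?e ?N m"
      hence "?e M n = ?e M i" using inj_theta[OF assms] eM_mem[OF assms(1)] i a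
        by (metis inj_onD)
      thus "n = i" using eM_inj[OF assms(1)] n i by (auto dest: inj_onD)
    qed
  qed
  have injf: "inj_on f {..<c}"
  proof (rule inj_onI)
    fix m1 m2 assume "m1 \<in> {..<c}" "m2 \<in> {..<c}" "f m1 = f m2"
    thus "m1 = m2" using fp eM_inj[OF NX] by (metis inj_onD lessThan_iff)
  qed
  have into: "f ` {..<c} \<subseteq> {..<c}" using fp by auto
  have "f ` {..<c} = {..<c}" using endo_inj_surj[OF _ into injf] by simp
  hence bf: "bij_betw f {..<c} {..<c}" using injf by (simp add: bij_betw_def)
  have "sigmaMj A lam \<theta> less0 k0 j0 M j = restrict f {..<c}"
    unfolding sigmaMj_def f_def by simp
  moreover have "bij_betw (restrict f {..<c}) {..<c} {..<c}"
    using bf by (rule bij_betw_cong[THEN iffD1, rotated]) auto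
  ultimately show ?thesis by (simp add: Bij_def)
qed


abbreviation "BG \<equiv> BijGroup {..<c}"
abbreviation "GG \<equiv> Ggroup A lam \<theta> less0 k0 j0"
abbreviation "Th \<equiv> Theta_hat A lam \<theta> less0 k0 j0"

lemma grpBG: "group BG" by (rule group_BijGroup)

lemma gens_sub: "{sigmaMj A lam \<theta> less0 k0 j0 M j | M j. M \<in> X \<and> j < lam} \<subseteq> carrier BG"
  using sigma_Bij by (auto simp: BijGroup_def)

lemma G_sub: "GG \<subseteq> carrier BG"
  unfolding Ggroup_def by (rule group.generate_incl[OF grpBG gens_sub])

lemma gen_in: "M\<in>X \<Longrightarrow> j<lam \<Longrightarrow> sigmaMj A lam \<theta> less0 k0 j0 M j \<in> GG"
  unfolding Ggroup_def by (rule generate.incl) blast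

lemma G_mult: "g\<in>GG \<Longrightarrow> h\<in>GG \<Longrightarrow> g \<otimes>\<^bsub>BG\<^esub> h \<in> GG"
  unfolding Ggroup_def by (rule generate.eng)

lemma G_one: "\<one>\<^bsub>BG\<^esub> \<in> GG"
  unfolding Ggroup_def by (rule generate.one)

lemma G_fin: "finite GG"
proof (rule finite_subset[OF G_sub])
  have "carrier BG \<subseteq> {..<c} \<rightarrow>\<^sub>E {..<c}"
  proof
    fix f assume "f \<in> carrier BG"
    hence "f \<in> Bij {..<c}" by (simp add: BijGroup_def)
    thus "f \<in> {..<c} \<rightarrow>\<^sub>E {..<c}"
      using Bij_imp_funcset Bij_imp_extensional by (auto simp: PiE_def)
  qed
  thus "finite (carrier BG)" by (rule finite_subset) (simp add: finite_PiE)
qed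

lemma X_fin: "finite X"
  by (rule finite_subset[of _ "Pow A"]) (auto simp: Xcal_def finA)

lemma iterX: "M\<in>X \<Longrightarrow> subst_iter (set_subst \<theta>) lam k M j \<in> X"
proof (induction k arbitrary: j)
  case 0 thus ?case by simp
next
  case (Suc k)
  have "j mod lam < lam" using lam by simp
  thus ?case using X_closed Suc by simp
qed

lemma iter_Th: assumes "M\<in>X"
  shows "\<exists>T\<in>GG. \<forall>\<sigma>\<in>GG. subst_iter Th lam k (\<sigma>,M) j = (\<sigma> \<otimes>\<^bsub>BG\<^esub> T, subst_iter (set_subst \<theta>) lam k M j)"
proof (induction k arbitrary: j)
  case 0
  show ?case
  proof (intro bexI[of _ "\<one>\<^bsub>BG\<^esub>"] ballI)
    fix \<sigma> assume "\<sigma> \<in> GG"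
    hence "\<sigma> \<in> carrier BG" using G_sub by blast
    thus "subst_iter Th lam 0 (\<sigma>, M) j = (\<sigma> \<otimes>\<^bsub>BG\<^esub> \<one>\<^bsub>BG\<^esub>, subst_iter (set_subst \<theta>) lam 0 M j)"
      using monoid.r_one[OF group.is_monoid[OF grpBG]] by simp
  qed (rule G_one)
next
  case (Suc k)
  obtain T where T: "T\<in>GG" "\<forall>\<sigma>\<in>GG. subst_iter Th lam k (\<sigma>,M) (j div lam) = (\<sigma> \<otimes>\<^bsub>BG\<^esub> T, subst_iter (set_subst \<theta>) lam k M (j div lam))"
    using Suc by blast
  define N where "N = subst_iter (set_subst \<theta>) lam k M (j div lam)"
  have NX: "N \<in> X" unfolding N_def using iterX[OF assms] .
  have jl: "j mod lam < lam" using lam by simp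
  define s where "s = sigmaMj A lam \<theta> less0 k0 j0 N (j mod lam)"
  have sG: "s \<in> GG" unfolding s_def using gen_in[OF NX jl] .
  show ?case
  proof (intro bexI[of _ "T \<otimes>\<^bsub>BG\<^esub> s"] ballI)
    fix \<sigma> assume sg: "\<sigma> \<in> GG"
    have "subst_iter Th lam (Suc k) (\<sigma>,M) j = Th (\<sigma> \<otimes>\<^bsub>BG\<^esub> T, N) (j mod lam)"
      using T(2) sg by (simp add: N_def)
    also have "\<dots> = ((\<sigma> \<otimes>\<^bsub>BG\<^esub> T) \<otimes>\<^bsub>BG\<^esub> s, set_subst \<theta> N (j mod lam))"
      by (simp add: Theta_hat_def s_def)
    also have "(\<sigma> \<otimes>\<^bsub>BG\<^esub> T) \<otimes>\<^bsub>BG\<^esub> s = \<sigma> \<otimes>\<^bsub>BG\<^esub> (T \<otimes>\<^bsub>BG\<^esub> s)"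
    proof -
      have "\<sigma> \<in> carrier BG" "T \<in> carrier BG" "s \<in> carrier BG" using sg T(1) sG G_sub by auto
      thus ?thesis by (rule monoid.m_assoc[OF group.is_monoid[OF grpBG]])
    qed
    finally show "subst_iter Th lam (Suc k) (\<sigma>,M) j = (\<sigma> \<otimes>\<^bsub>BG\<^esub> (T \<otimes>\<^bsub>BG\<^esub> s), subst_iter (set_subst \<theta>) lam (Suc k) M j)"
      by (simp add: N_def)
  qed (rule G_mult[OF T(1) sG])
qed

lemma main:
  assumes k0: "k0 \<ge> 1" and j0: "j0 < lam ^ k0"
  shows "column_number (GG \<times> X) lam Th = card GG"
proof -
  let ?C = "\<lambda>k j. (\<lambda>b. subst_iter Th lam k b j) ` (GG \<times> X)"
  let ?S = "{card (?C k j) | k j. 1 \<le> k \<and> j < lam ^ k}"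
  have finB: "finite (GG \<times> X)" using G_fin X_fin by simp
  have finS': "finite ?S"
    by (rule finite_subset[of _ "{..card (GG \<times> X)}"]) (auto intro: card_image_le[OF finB])
  have lower: "card GG \<le> card (?C k j)" for k j
  proof -
    obtain T where T: "T\<in>GG" "\<forall>\<sigma>\<in>GG. subst_iter Th lam k (\<sigma>,M0) j = (\<sigma> \<otimes>\<^bsub>BG\<^esub> T, subst_iter (set_subst \<theta>) lam k M0 j)"
      using iter_Th[OF M0X] by blast
    let ?f = "\<lambda>\<sigma>. subst_iter Th lam k (\<sigma>,M0) j"
    have inj: "inj_on ?f GG"
    proof (rule inj_onI)
      fix x y assume xy: "x\<in>GG" "y\<in>GG" "?f x = ?f y"
      hence "x \<otimes>\<^bsub>BG\<^esub> T = y \<otimes>\<^bsub>BG\<^esub> T" using T by simp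
      moreover have "x \<in> carrier BG" "y \<in> carrier BG" "T \<in> carrier BG" using xy T(1) G_sub by auto
      ultimately show "x = y" using group.right_cancel[OF grpBG] by metis
    qed
    have "?f ` GG \<subseteq> ?C k j" using M0X by blast
    hence "card (?f ` GG) \<le> card (?C k j)" using finB by (intro card_mono) auto
    thus ?thesis using inj by (simp add: card_image)
  qed
  have upper: "card (?C k0 j0) \<le> card GG"
  proof -
    have "?C k0 j0 \<subseteq> GG \<times> {M0}"
    proof
      fix p assume "p \<in> ?C k0 j0"
      then obtain \<sigma> M where sM: "\<sigma>\<in>GG" "M\<in>X" "p = subst_iter Th lam k0 (\<sigma>,M) j0" by blast
      obtain T where T: "T\<in>GG" "\<forall>\<sigma>\<in>GG. subst_iter Th lam k0 (\<sigma>,M) j0 = (\<sigma> \<otimes>\<^bsub>BG\<^esub> T, subst_iter (set_subst \<theta>) lam k0 M j0)"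
        using iter_Th[OF sM(2)] by blast
      have "p = (\<sigma> \<otimes>\<^bsub>BG\<^esub> T, M0)" using sM T retk0 by simp
      thus "p \<in> GG \<times> {M0}" using G_mult[OF sM(1) T(1)] by simp
    qed
    hence "card (?C k0 j0) \<le> card (GG \<times> {M0})" using G_fin by (intro card_mono) auto
    thus ?thesis by (simp add: card_cartesian_product)
  qed
  have "Min ?S = card GG"
  proof (rule Min_eqI[OF finS'])
    show "\<And>y. y \<in> ?S \<Longrightarrow> card GG \<le> y" using lower by blast
    have "card GG = card (?C k0 j0)" using upper lower[of k0 j0] by simp
    thus "card GG \<in> ?S" using k0 j0 by blast
  qed
  thus ?thesis unfolding column_number_def .
qed

end

theorem mainTheorem18:
  fixes A :: "'a set" and lam :: nat and \<theta> :: "'a \<Rightarrow> nat \<Rightarrow> 'a"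
    and a0 :: 'a and M0 :: "'a set" and less0 :: "'a \<Rightarrow> 'a \<Rightarrow> bool"
    and k0 j0 :: nat
  assumes finA: "finite A" and neA: "A \<noteq> {}"
    and lam: "lam \<ge> 2"
    and closed: "\<forall>a\<in>A. \<forall>j<lam. \<theta> a j \<in> A"
    and prim: "primitive_subst A lam \<theta>"
    and inj: "inj_on (\<lambda>a. map (\<theta> a) [0..<lam]) A"
    and infin: "infinite (subshift A lam \<theta>)"
    and a0M0: "a0 \<in> M0" and M0X: "M0 \<in> Xcal A lam \<theta>"
    and fixa0: "\<theta> a0 0 = a0" and fixM0: "set_subst \<theta> M0 0 = M0"
    and irrefl: "\<forall>a\<in>M0. \<not> less0 a a"
    and trans: "\<forall>a\<in>M0. \<forall>b\<in>M0. \<forall>d\<in>M0. less0 a b \<longrightarrow> less0 b d \<longrightarrow> less0 a d"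
    and total: "\<forall>a\<in>M0. \<forall>b\<in>M0. a \<noteq> b \<longrightarrow> less0 a b \<or> less0 b a"
    and minim: "\<forall>b\<in>M0. b \<noteq> a0 \<longrightarrow> less0 a0 b"
    and k0: "k0 \<ge> 1" and j0: "j0 < lam ^ k0"
    and fixk0: "\<forall>a\<in>M0. subst_iter \<theta> lam k0 a j0 = a"
    and retk0: "\<forall>M\<in>Xcal A lam \<theta>. subst_iter (set_subst \<theta>) lam k0 M j0 = M0"
  shows "column_number (Ggroup A lam \<theta> less0 k0 j0 \<times> Xcal A lam \<theta>) lam
            (Theta_hat A lam \<theta> less0 k0 j0)
         = card (Ggroup A lam \<theta> less0 k0 j0)"
proof -
  interpret TS A lam \<theta> less0 k0 j0 M0
    by (rule TS.intro) (fact finA lam closed M0X irrefl trans total retk0)+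
  show ?thesis using main[OF k0 j0] .
qed

end
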